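(* There is an absolute constant $c>0$ such that the following holds. Let $\beta^*\in\mathbb R$, $\mathbf X\in\mathbb R^n$ with i.i.d. $N(0,1)$ entries, and $\eta\in\mathbb R^n$ deterministic with $|\{i:|\eta_i|\le1\}|\ge\alpha n$ for some $\alpha\in(0,1]$; let $\mathbf y=\mathbf X\beta^*+\eta$. Let $\hat\beta$ be the output of the Univariate Median Algorithm on $(\mathbf y,\mathbf X)$. Then for any $0<\tau\le\alpha^2n$, \[|\beta^*-\hat\beta|^2\le\frac{\tau}{\alpha^2n}\] with probability at least $1-2\exp(-c\tau)$.
   Context: Univariate Median Algorithm on input $(y,X)\in\mathbb R^n\times\mathbb R^n$: sample independent $w_i\sim N(0,1)$ and Rademacher signs $\sigma_i$ ($i\in[n]$), independent of everything else, and set $y'_i=\sigma_iy_i+w_i$, $X'_i=\sigma_iX_i$. Let $M=\{i:|X'_i|\ge1/2\}$ and output the median of $\{y'_i/X'_i:i\in M\}$ (the $\lceil|M|/2\rceil$-th smallest value). *)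

theory Defs
  imports "HOL-Probability.Probability"
begin

definition std_gauss :: "real measure" where
  "std_gauss = density lborel std_normal_density"

definition rademacher :: "real measure" where
  "rademacher = measure_pmf (pmf_of_set {-1, 1})"

text \<open>Per-coordinate randomness: (X_i, w_i, sigma_i), all independent.\<close>
definition coord_measure :: "(real \<times> real \<times> real) measure" where
  "coord_measure = std_gauss \<Otimes>\<^sub>M (std_gauss \<Otimes>\<^sub>M rademacher)"

definition sample_space :: "nat \<Rightarrow> (nat \<Rightarrow> real \<times> real \<times> real) measure" where
  "sample_space n = (\<Pi>\<^sub>M i\<in>{..<n}. coord_measure)"

text \<open>The k-th smallest (1-indexed) element of the multiset of values f i, i in M.\<close>
definition kth_smallest :: "nat \<Rightarrow> (nat \<Rightarrow> real) \<Rightarrow> nat set \<Rightarrow> real" where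
  "kth_smallest k f M = sort (map f (sorted_list_of_set M)) ! (k - 1)"

text \<open>Univariate Median Algorithm, given the data y, X and the internal randomness
  w (Gaussian noise) and sigma (signs). Convention: outputs 0 if the set M is empty.\<close>
definition median_alg ::
  "nat \<Rightarrow> (nat \<Rightarrow> real) \<Rightarrow> (nat \<Rightarrow> real) \<Rightarrow> (nat \<Rightarrow> real) \<Rightarrow> (nat \<Rightarrow> real) \<Rightarrow> real" where
  "median_alg n y X w \<sigma> =
    (let y' = (\<lambda>i. \<sigma> i * y i + w i);
         X' = (\<lambda>i. \<sigma> i * X i);
         M = {i. i < n \<and> \<bar>X' i\<bar> \<ge> 1/2}
     in if M = {} then 0
        else kth_smallest (nat \<lceil>real (card M) / 2\<rceil>) (\<lambda>i. y' i / X' i) M)"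

end

theory Submission imports Defs begin

lemma sets_std_gauss[simp, measurable_cong]: "sets std_gauss = sets borel"
  by (simp add: std_gauss_def)
lemma space_std_gauss[simp]: "space std_gauss = UNIV"
  by (simp add: std_gauss_def)
lemma sets_rademacher[simp, measurable_cong]: "sets rademacher = sets (count_space UNIV)"
  by (simp add: rademacher_def)
lemma space_rademacher[simp]: "space rademacher = UNIV"
  by (simp add: rademacher_def)
lemma prob_std_gauss: "prob_space std_gauss"
  unfolding std_gauss_def by (rule prob_space_normal_density) simp
lemma prob_rademacher: "prob_space rademacher"
  unfolding rademacher_def by (rule measure_pmf.prob_space_axioms)
lemma prob_coord: "prob_space coord_measure"
  unfolding coord_measure_def by (intro prob_space_pair prob_std_gauss prob_rademacher)
lemma prob_sample: "prob_space (sample_space n)"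
  unfolding sample_space_def by (intro prob_space_PiM prob_coord)

interpretation G: prob_space std_gauss by (rule prob_std_gauss)
interpretation RD: prob_space rademacher by (rule prob_rademacher)
interpretation C: prob_space coord_measure by (rule prob_coord)

lemma sets_coord[measurable_cong]: "sets coord_measure = sets (borel \<Otimes>\<^sub>M (borel \<Otimes>\<^sub>M count_space UNIV))"
  unfolding coord_measure_def by (intro sets_pair_measure_cong) simp_all

lemma meas_sign[measurable]: "(\<lambda>p::real\<times>real\<times>real. snd (snd p)) \<in> borel_measurable (borel \<Otimes>\<^sub>M (borel \<Otimes>\<^sub>M count_space UNIV))"
  by (rule measurable_compose[OF measurable_snd measurable_compose[OF measurable_snd]]) (auto)

lemma "(\<lambda>p::real\<times>real\<times>real. (snd (snd p) * (fst p * b + e) + fst (snd p)) / (snd (snd p) * fst p)) \<in> borel_measurable coord_measure"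
  by measurable

lemma gauss_sym: "distr std_gauss std_gauss uminus = std_gauss"
proof -
  have "std_gauss = density (distr lborel borel uminus) std_normal_density"
    by (simp add: std_gauss_def lborel_distr_uminus)
  also have "\<dots> = distr (density lborel (\<lambda>x. std_normal_density (- x))) borel uminus"
    by (rule density_distr) auto
  also have "(\<lambda>x::real. std_normal_density (- x)) = std_normal_density"
    by (simp add: fun_eq_iff normal_density_def)
  finally have "std_gauss = distr std_gauss borel uminus" by (simp add: std_gauss_def)
  also have "\<dots> = distr std_gauss std_gauss uminus"
    by (intro distr_cong) auto
  finally show ?thesis ..
qed

lemma rad_sym: "distr rademacher rademacher uminus = rademacher"
proof -
  have "map_pmf uminus (pmf_of_set {-1, 1::real}) = pmf_of_set {-1,1}"
    by (subst map_pmf_of_set_inj) (auto simp: inj_on_def insert_commute)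
  hence "distr rademacher (count_space UNIV) uminus = rademacher"
    unfolding rademacher_def by (metis map_pmf_rep_eq)
  moreover have "distr rademacher (count_space UNIV) uminus = distr rademacher rademacher uminus"
    by (intro distr_cong) auto
  ultimately show ?thesis by simp
qed

definition Rf :: "real\<times>real\<times>real \<Rightarrow> real\<times>real\<times>real" where
  "Rf p = (- fst p, - fst (snd p), - snd (snd p))"

lemma neg_sign_meas[measurable]: "(\<lambda>p::real\<times>real\<times>real. - snd (snd p)) \<in> measurable (borel \<Otimes>\<^sub>M (borel \<Otimes>\<^sub>M count_space UNIV)) (count_space UNIV)"
  by (rule measurable_compose[OF measurable_compose[OF measurable_snd measurable_snd] measurable_count_space])

lemma Rf_meas[measurable]: "Rf \<in> measurable coord_measure coord_measure"
  unfolding Rf_def by measurable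

lemma neg_pair_meas: "(\<lambda>(x::real, y::real). (- x, - y)) \<in> measurable (std_gauss \<Otimes>\<^sub>M rademacher) (std_gauss \<Otimes>\<^sub>M rademacher)"
proof -
  have "(\<lambda>p::real\<times>real. - snd p) \<in> measurable (std_gauss \<Otimes>\<^sub>M rademacher) (count_space UNIV)"
    by (rule measurable_compose[OF measurable_snd]) (simp add: rademacher_def)
  hence "(\<lambda>p::real\<times>real. - snd p) \<in> measurable (std_gauss \<Otimes>\<^sub>M rademacher) rademacher"
    by (simp cong: measurable_cong_sets)
  then show ?thesis
    by (simp add: split_beta')
qed

lemma coord_sym: "distr coord_measure coord_measure Rf = coord_measure"
proof -
  have i: "distr std_gauss std_gauss uminus \<Otimes>\<^sub>M distr rademacher rademacher uminus
     = distr (std_gauss \<Otimes>\<^sub>M rademacher) (std_gauss \<Otimes>\<^sub>M rademacher) (\<lambda>(x, y). (- x, - y))"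
    by (rule pair_measure_distr) (auto simp: rad_sym intro: prob_space_imp_sigma_finite[OF prob_rademacher])
  have p: "prob_space (std_gauss \<Otimes>\<^sub>M rademacher)" by (intro prob_space_pair prob_std_gauss prob_rademacher)
  have "distr std_gauss std_gauss uminus \<Otimes>\<^sub>M distr (std_gauss \<Otimes>\<^sub>M rademacher) (std_gauss \<Otimes>\<^sub>M rademacher) (\<lambda>(x, y). (- x, - y))
     = distr (std_gauss \<Otimes>\<^sub>M (std_gauss \<Otimes>\<^sub>M rademacher)) (std_gauss \<Otimes>\<^sub>M (std_gauss \<Otimes>\<^sub>M rademacher)) (\<lambda>(x, y). (- x, (\<lambda>(x, y). (- x, - y)) y))"
    by (rule pair_measure_distr) (auto simp flip: i simp: gauss_sym rad_sym neg_pair_meas intro: prob_space_imp_sigma_finite p)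
  moreover have "(\<lambda>(x, y). (- x, (\<lambda>(x, y). (- x, - y)) y)) = Rf"
    by (auto simp: Rf_def fun_eq_iff split: prod.splits)
  ultimately show ?thesis
    by (simp add: gauss_sym rad_sym i[symmetric] coord_measure_def)
qed

definition kap :: real where "kap = exp (-2) / sqrt (2 * pi)"

lemma kap_pos: "kap > 0" by (simp add: kap_def)

lemma gauss_Icc:
  assumes "a \<le> b" "-2 \<le> a" "b \<le> 2"
  shows "measure std_gauss {a..b} \<ge> kap * (b - a)"
proof -
  have "emeasure std_gauss {a..b} = (\<integral>\<^sup>+x. ennreal (std_normal_density x) * indicator {a..b} x \<partial>lborel)"
    unfolding std_gauss_def by (subst emeasure_density) auto
  also have "\<dots> \<ge> (\<integral>\<^sup>+x. ennreal kap * indicator {a..b} x \<partial>lborel)"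
  proof (intro nn_integral_mono)
    fix x :: real
    show "ennreal kap * indicator {a..b} x \<le> ennreal (std_normal_density x) * indicator {a..b} x"
    proof (cases "x \<in> {a..b}")
      case True
      hence "\<bar>x\<bar> \<le> \<bar>2\<bar>" using assms by auto
      hence "x\<^sup>2 \<le> 4" using abs_le_square_iff[of x 2] by simp
      hence "kap \<le> std_normal_density x"
        unfolding kap_def normal_density_def by (auto intro!: divide_right_mono simp: field_simps)
      thus ?thesis using True by (auto intro: ennreal_leI)
    qed simp
  qed
  finally have "emeasure std_gauss {a..b} \<ge> ennreal kap * ennreal (b - a)"
    using assms by (simp add: nn_integral_cmult_indicator)
  moreover have "emeasure std_gauss {a..b} = ennreal (measure std_gauss {a..b})"
    by (rule G.emeasure_eq_measure)
  ultimately have "ennreal (kap * (b - a)) \<le> ennreal (measure std_gauss {a..b})"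
    using assms kap_pos by (simp add: ennreal_mult)
  thus ?thesis by (simp add: ennreal_le_iff)
qed

lemma measure_times_prob:
  assumes "prob_space N" "prob_space M" "A \<in> sets N" "B \<in> sets M"
  shows "measure (N \<Otimes>\<^sub>M M) (A \<times> B) = measure N A * measure M B"
proof -
  interpret M: prob_space M by fact
  interpret N: prob_space N by fact
  have "emeasure (N \<Otimes>\<^sub>M M) (A \<times> B) = emeasure N A * emeasure M B"
    by (rule M.emeasure_pair_measure_Times) (use assms in auto)
  thus ?thesis
    by (simp add: measure_def enn2real_mult)
qed

definition inM :: "real\<times>real\<times>real \<Rightarrow> bool" where
  "inM p = (1/2 \<le> \<bar>snd (snd p) * fst p\<bar>)"
definition vv :: "real \<Rightarrow> real \<Rightarrow> real\<times>real\<times>real \<Rightarrow> real" where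
  "vv b e p = (snd (snd p) * (fst p * b + e) + fst (snd p)) / (snd (snd p) * fst p)"
definition up :: "real \<Rightarrow> real \<Rightarrow> real \<Rightarrow> real\<times>real\<times>real \<Rightarrow> real" where
  "up b t e p = (if inM p \<and> vv b e p \<le> b + t then 1 else 0) - (if inM p \<and> \<not> vv b e p \<le> b + t then 1 else 0)"
definition lo :: "real \<Rightarrow> real \<Rightarrow> real \<Rightarrow> real\<times>real\<times>real \<Rightarrow> real" where
  "lo b t e p = (if inM p \<and> \<not> vv b e p < b - t then 1 else 0) - (if inM p \<and> vv b e p < b - t then 1 else 0)"

lemma up_meas[measurable]: "up b t e \<in> borel_measurable coord_measure"
  unfolding up_def inM_def vv_def by measurable
lemma lo_meas[measurable]: "lo b t e \<in> borel_measurable coord_measure"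
  unfolding lo_def inM_def vv_def by measurable

lemma up_bound: "\<bar>up b t e p\<bar> \<le> 1" by (simp add: up_def)
lemma lo_bound: "\<bar>lo b t e p\<bar> \<le> 1" by (simp add: lo_def)

lemma inM_R: "inM (Rf p) = inM p" by (simp add: inM_def Rf_def)
lemma Rf_Rf: "Rf (Rf p) = p" by (simp add: Rf_def)

lemma vv_R: assumes "inM p" shows "vv b e (Rf p) = 2 * b - vv b e p"
proof -
  have "snd (snd p) * fst p \<noteq> 0" using assms by (auto simp: inM_def)
  thus ?thesis by (simp add: vv_def Rf_def field_simps)
qed

lemma lo_R: "lo b t e (Rf p) = up b t e p"
  by (cases "inM p") (auto simp: lo_def up_def inM_R vv_R)

lemma up_sum_R: assumes "0 \<le> t"
  shows "up b t e p + up b t e (Rf p) \<ge> 2 * indicator ({x. 1/2 \<le> \<bar>x\<bar>} \<times> ({-e-t/2..-e+t/2} \<times> {1})) p"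
proof (cases "inM p")
  case False
  hence "p \<notin> {x. 1/2 \<le> \<bar>x\<bar>} \<times> ({-e-t/2..-e+t/2} \<times> {1})" by (auto simp: inM_def)
  thus ?thesis using False by (simp add: up_def inM_R)
next
  case True
  have *: "up b t e p + up b t e (Rf p) \<ge> 0"
    using True assms by (auto simp: up_def inM_R vv_R)
  show ?thesis
  proof (cases "p \<in> {x. 1/2 \<le> \<bar>x\<bar>} \<times> ({-e-t/2..-e+t/2} \<times> {1})")
    case False thus ?thesis using * by simp
  next
    case Tp: True
    obtain x w where p: "p = (x, w, 1)" and x: "1/2 \<le> \<bar>x\<bar>" and w1: "-e-t/2 \<le> w" and w2: "w \<le> -e+t/2"
      using Tp by (cases p) auto
    have w: "\<bar>e + w\<bar> \<le> t/2" using w1 w2 by linarith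
    have x0: "x \<noteq> 0" using x by auto
    have "vv b e p = b + (e + w) / x" using x0 by (simp add: p vv_def field_simps)
    moreover have "\<bar>(e + w) / x\<bar> \<le> t"
    proof -
      have "\<bar>(e + w) / x\<bar> = \<bar>e + w\<bar> / \<bar>x\<bar>" by (simp add: abs_divide)
      also have "\<dots> \<le> (t/2) / (1/2)"
        by (intro frac_le) (use w x assms in auto)
      finally show ?thesis by simp
    qed
    ultimately have vb: "\<bar>vv b e p - b\<bar> \<le> t" by simp
    have ind: "indicat_real ({x. 1/2 \<le> \<bar>x\<bar>} \<times> ({-e-t/2..-e+t/2} \<times> {1})) p = 1"
      using Tp by simp
    show ?thesis
      unfolding ind using True vb by (simp add: up_def inM_R vv_R abs_le_iff)
  qed
qed

lemma int_R: assumes [measurable]: "f \<in> borel_measurable coord_measure"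
  shows "integral\<^sup>L coord_measure (\<lambda>p. f (Rf p)) = (integral\<^sup>L coord_measure f :: real)"
proof -
  have "integral\<^sup>L (distr coord_measure coord_measure Rf) f = integral\<^sup>L coord_measure (\<lambda>p. f (Rf p))"
    by (rule integral_distr) auto
  thus ?thesis by (simp add: coord_sym)
qed

lemma int_up_int: "integrable coord_measure (up b t e)"
  by (rule C.integrable_const_bound[where B=1]) (auto simp: up_bound)
lemma int_lo_int: "integrable coord_measure (lo b t e)"
  by (rule C.integrable_const_bound[where B=1]) (auto simp: lo_bound)

lemma E_lo: "integral\<^sup>L coord_measure (lo b t e) = integral\<^sup>L coord_measure (up b t e)"
proof -
  have "integral\<^sup>L coord_measure (lo b t e) = integral\<^sup>L coord_measure (\<lambda>p. lo b t e (Rf p))"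
    by (rule int_R[symmetric]) measurable
  also have "\<dots> = integral\<^sup>L coord_measure (up b t e)"
    by (simp add: lo_R)
  finally show ?thesis .
qed

lemma E_up_lower:
  assumes "0 \<le> t"
  shows "integral\<^sup>L coord_measure (up b t e) \<ge> measure coord_measure ({x. 1/2 \<le> \<bar>x\<bar>} \<times> ({-e-t/2..-e+t/2} \<times> {1}))"
proof -
  let ?T = "{x::real. 1/2 \<le> \<bar>x\<bar>} \<times> ({-e-t/2..-e+t/2} \<times> {1::real})"
  have Ts: "?T \<in> sets coord_measure"
    unfolding coord_measure_def by (intro pair_measureI) auto
  have "2 * integral\<^sup>L coord_measure (up b t e) = integral\<^sup>L coord_measure (up b t e) + integral\<^sup>L coord_measure (\<lambda>p. up b t e (Rf p))"
    by (simp add: int_R)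
  also have "\<dots> = integral\<^sup>L coord_measure (\<lambda>p. up b t e p + up b t e (Rf p))"
    by (rule Bochner_Integration.integral_add[symmetric]) (auto intro!: C.integrable_const_bound[where B=1] simp: up_bound)
  also have "\<dots> \<ge> integral\<^sup>L coord_measure (\<lambda>p. 2 * indicator ?T p)"
  proof (intro integral_mono up_sum_R assms)
    show "integrable coord_measure (\<lambda>p. 2 * indicat_real ?T p)"
      using Ts by (intro integrable_mult_right integrable_real_indicator) (auto simp: C.emeasure_eq_measure)
    show "integrable coord_measure (\<lambda>p. up b t e p + up b t e (Rf p))"
      by (intro Bochner_Integration.integrable_add) (auto intro!: C.integrable_const_bound[where B=1] simp: up_bound)
  qed
  finally have "2 * integral\<^sup>L coord_measure (up b t e) \<ge> 2 * measure coord_measure ?T"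
    using Ts by (simp add: Int_absorb2 sets.sets_into_space)
  thus ?thesis by simp
qed

lemma E_up_good:
  assumes "\<bar>e\<bar> \<le> 1" "0 < t" "t \<le> 1"
  shows "integral\<^sup>L coord_measure (up b t e) \<ge> kap\<^sup>2 * t / 4"
proof -
  let ?A = "{x::real. 1/2 \<le> \<bar>x\<bar>}" and ?B = "{-e-t/2..-e+t/2}"
  have As: "?A \<in> sets borel" by measurable
  have "measure coord_measure (?A \<times> (?B \<times> {1})) = measure std_gauss ?A * measure (std_gauss \<Otimes>\<^sub>M rademacher) (?B \<times> {1})"
    unfolding coord_measure_def
    by (rule measure_times_prob) (use As in \<open>auto intro!: prob_std_gauss prob_space_pair prob_rademacher pair_measureI\<close>)
  also have "measure (std_gauss \<Otimes>\<^sub>M rademacher) (?B \<times> {1}) = measure std_gauss ?B * measure rademacher {1}"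
    by (rule measure_times_prob) (auto intro!: prob_std_gauss prob_rademacher)
  also have "measure rademacher {1} = 1/2"
    unfolding rademacher_def by (simp add: measure_pmf_of_set)
  finally have eq: "measure coord_measure (?A \<times> (?B \<times> {1})) = measure std_gauss ?A * (measure std_gauss ?B * (1/2))" .
  have a1: "measure std_gauss ?A \<ge> kap / 2"
  proof -
    have "kap * (1 - 1/2) \<le> measure std_gauss {1/2..1::real}" by (rule gauss_Icc) auto
    also have "\<dots> \<le> measure std_gauss ?A"
      by (rule G.finite_measure_mono) (use As in auto)
    finally show ?thesis by simp
  qed
  have b1: "measure std_gauss ?B \<ge> kap * t"
  proof -
    have "kap * ((-e+t/2) - (-e-t/2)) \<le> measure std_gauss ?B"
      by (rule gauss_Icc) (use assms in auto)
    thus ?thesis by simp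
  qed
  have "kap\<^sup>2 * t / 4 = (kap / 2) * ((kap * t) * (1/2))" by (simp add: power2_eq_square)
  also have "\<dots> \<le> measure std_gauss ?A * (measure std_gauss ?B * (1/2))"
    using a1 b1 kap_pos assms by (intro mult_mono) auto
  also have "\<dots> \<le> integral\<^sup>L coord_measure (up b t e)"
    using E_up_lower[where b=b and t=t and e=e] assms eq by simp
  finally show ?thesis .
qed

lemma E_up_nonneg:
  assumes "0 \<le> t" shows "integral\<^sup>L coord_measure (up b t e) \<ge> 0"
  using E_up_lower[OF assms, where b=b and e=e] by (meson measure_nonneg order_trans)

lemma space_sample: "space (sample_space n) = (\<Pi>\<^sub>E i\<in>{..<n}. UNIV)"
  by (simp add: sample_space_def space_PiM space_pair_measure coord_measure_def)

lemma comp_indep: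
  assumes "n > 0"
  shows "prob_space.indep_vars (sample_space n) (\<lambda>_. coord_measure) (\<lambda>i \<omega>. \<omega> i) {..<n}"
proof -
  interpret S: prob_space "sample_space n" by (rule prob_sample)
  have rv: "\<And>i. i \<in> {..<n} \<Longrightarrow> (\<lambda>\<omega>. \<omega> i) \<in> measurable (sample_space n) coord_measure"
    unfolding sample_space_def by (rule measurable_component_singleton)
  have "distr (sample_space n) (\<Pi>\<^sub>M i\<in>{..<n}. coord_measure) (\<lambda>x. \<lambda>i\<in>{..<n}. x i)
      = distr (sample_space n) (sample_space n) (\<lambda>x. x)"
    by (intro distr_cong) (auto simp: sample_space_def space_PiM PiE_def extensional_def restrict_def fun_eq_iff)
  also have "\<dots> = sample_space n" by (rule distr_id)
  also have "\<dots> = (\<Pi>\<^sub>M i\<in>{..<n}. distr (sample_space n) coord_measure (\<lambda>\<omega>. \<omega> i))"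
    unfolding sample_space_def
    by (intro PiM_cong refl distr_PiM_component[symmetric] prob_coord) auto
  finally show ?thesis
    using assms by (subst S.indep_vars_iff_distr_eq_PiM') (auto intro: rv)
qed

lemma E_comp:
  assumes "i < n" and [measurable]: "f \<in> borel_measurable coord_measure"
  shows "integral\<^sup>L (sample_space n) (\<lambda>\<omega>. f (\<omega> i)) = (integral\<^sup>L coord_measure f :: real)"
proof -
  have [measurable]: "(\<lambda>\<omega>. \<omega> i) \<in> measurable (sample_space n) coord_measure"
    unfolding sample_space_def using assms(1) by (intro measurable_component_singleton) auto
  have "integral\<^sup>L (sample_space n) (\<lambda>\<omega>. f (\<omega> i)) = integral\<^sup>L (distr (sample_space n) coord_measure (\<lambda>\<omega>. \<omega> i)) f"
    by (rule integral_distr[symmetric]) auto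
  also have "distr (sample_space n) coord_measure (\<lambda>\<omega>. \<omega> i) = coord_measure"
    unfolding sample_space_def using assms(1) by (intro distr_PiM_component prob_coord) auto
  finally show ?thesis .
qed

lemma hoeff:
  fixes F :: "nat \<Rightarrow> real\<times>real\<times>real \<Rightarrow> real"
  assumes n: "n > 0"
  assumes Fm: "\<And>i. F i \<in> borel_measurable coord_measure"
  assumes Fb: "\<And>i p. \<bar>F i p\<bar> \<le> 1"
  assumes mu: "(\<Sum>i<n. integral\<^sup>L coord_measure (F i)) \<ge> 0"
  shows "measure (sample_space n) {\<omega> \<in> space (sample_space n). (\<Sum>i<n. F i (\<omega> i)) \<le> 0}
     \<le> exp (- (\<Sum>i<n. integral\<^sup>L coord_measure (F i))\<^sup>2 / (2 * real n))"
proof -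
  interpret S: prob_space "sample_space n" by (rule prob_sample)
  have ind: "S.indep_vars (\<lambda>_. borel) (\<lambda>i \<omega>. F i (\<omega> i)) {..<n}"
    by (rule S.indep_vars_compose2[OF comp_indep[OF n]]) (use Fm in auto)
  interpret H: Hoeffding_ineq "sample_space n" "{..<n}" "\<lambda>i \<omega>. F i (\<omega> i)" "\<lambda>_. -1" "\<lambda>_. 1"
     "\<Sum>i<n. S.expectation (\<lambda>\<omega>. F i (\<omega> i))"
  proof unfold_locales
    show "finite {..<n}" by simp
    show "S.indep_vars (\<lambda>_. borel) (\<lambda>i \<omega>. F i (\<omega> i)) {..<n}" by (rule ind)
    fix i assume "i \<in> {..<n}"
    show "AE x in sample_space n. F i (x i) \<in> {-1..1}"
      using Fb by (intro AE_I2) (auto simp: abs_le_iff)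
  qed simp
  define m where "m = (\<Sum>i<n. integral\<^sup>L coord_measure (F i))"
  have meq: "(\<Sum>i<n. S.expectation (\<lambda>\<omega>. F i (\<omega> i))) = m"
    unfolding m_def by (intro sum.cong refl E_comp Fm) auto
  have "S.prob {\<omega> \<in> space (sample_space n). (\<Sum>i<n. F i (\<omega> i)) \<le> m - m}
     \<le> exp (-2 * m\<^sup>2 / (\<Sum>i<n. (1 - (-1))\<^sup>2))"
    using H.Hoeffding_ineq_le[of m] mu n by (simp add: meq m_def)
  also have "-2 * m\<^sup>2 / (\<Sum>i<n. (1 - (-1::real))\<^sup>2) = - m\<^sup>2 / (2 * real n)"
    by simp
  finally show ?thesis by (simp add: m_def)
qed

lemma sorted_le_iff:
  fixes xs :: "real list"
  assumes "sorted xs" "1 \<le> k" "k \<le> length xs"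
  shows "xs ! (k - 1) \<le> a \<longleftrightarrow> k \<le> card {j. j < length xs \<and> xs ! j \<le> a}"
proof
  assume h: "xs ! (k - 1) \<le> a"
  have "{..<k} \<subseteq> {j. j < length xs \<and> xs ! j \<le> a}"
  proof
    fix j assume "j \<in> {..<k}"
    hence "j \<le> k - 1" "k - 1 < length xs" using assms by auto
    hence "xs ! j \<le> xs ! (k - 1)" using sorted_nth_mono[OF assms(1)] by blast
    thus "j \<in> {j. j < length xs \<and> xs ! j \<le> a}" using h \<open>j \<in> {..<k}\<close> assms by auto
  qed
  from card_mono[OF _ this] show "k \<le> card {j. j < length xs \<and> xs ! j \<le> a}" by simp
next
  assume h: "k \<le> card {j. j < length xs \<and> xs ! j \<le> a}"
  show "xs ! (k - 1) \<le> a"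
  proof (rule ccontr)
    assume "\<not> xs ! (k - 1) \<le> a"
    have "{j. j < length xs \<and> xs ! j \<le> a} \<subseteq> {..<k-1}"
    proof
      fix j assume j: "j \<in> {j. j < length xs \<and> xs ! j \<le> a}"
      show "j \<in> {..<k-1}"
      proof (rule ccontr)
        assume "j \<notin> {..<k-1}"
        hence "xs ! (k-1) \<le> xs ! j" using j sorted_nth_mono[OF assms(1)] by auto
        thus False using j \<open>\<not> xs ! (k - 1) \<le> a\<close> by auto
      qed
    qed
    from card_mono[OF _ this] have "card {j. j < length xs \<and> xs ! j \<le> a} \<le> k - 1" by simp
    thus False using h assms by linarith
  qed
qed

lemma sorted_ge_iff:
  fixes xs :: "real list"
  assumes "sorted xs" "1 \<le> k" "k \<le> length xs"
  shows "b \<le> xs ! (k - 1) \<longleftrightarrow> card {j. j < length xs \<and> xs ! j < b} < k"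
proof
  assume h: "b \<le> xs ! (k - 1)"
  have "{j. j < length xs \<and> xs ! j < b} \<subseteq> {..<k-1}"
  proof
    fix j assume j: "j \<in> {j. j < length xs \<and> xs ! j < b}"
    show "j \<in> {..<k-1}"
    proof (rule ccontr)
      assume "j \<notin> {..<k-1}"
      hence "xs ! (k-1) \<le> xs ! j" using j sorted_nth_mono[OF assms(1)] by auto
      thus False using j h by auto
    qed
  qed
  from card_mono[OF _ this] have "card {j. j < length xs \<and> xs ! j < b} \<le> k - 1" by simp
  thus "card {j. j < length xs \<and> xs ! j < b} < k" using assms by linarith
next
  assume h: "card {j. j < length xs \<and> xs ! j < b} < k"
  show "b \<le> xs ! (k - 1)"
  proof (rule ccontr)
    assume h2: "\<not> b \<le> xs ! (k - 1)"
    have "{..<k} \<subseteq> {j. j < length xs \<and> xs ! j < b}"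
    proof
      fix j assume "j \<in> {..<k}"
      hence "j \<le> k - 1" "k - 1 < length xs" using assms by auto
      hence "xs ! j \<le> xs ! (k - 1)" using sorted_nth_mono[OF assms(1)] by blast
      thus "j \<in> {j. j < length xs \<and> xs ! j < b}" using h2 \<open>j \<in> {..<k}\<close> assms by auto
    qed
    from card_mono[OF _ this] have "k \<le> card {j. j < length xs \<and> xs ! j < b}" by simp
    thus False using h by simp
  qed
qed

lemma count_sort:
  assumes "finite M"
  shows "card {j. j < length (sort (map f (sorted_list_of_set M))) \<and> P (sort (map f (sorted_list_of_set M)) ! j)}
       = card {i \<in> M. P (f i)}"
proof -
  let ?l = "sorted_list_of_set M"
  have "card {j. j < length (sort (map f ?l)) \<and> P (sort (map f ?l) ! j)} = length (filter P (sort (map f ?l)))"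
    by (rule length_filter_conv_card[symmetric])
  also have "\<dots> = length (filter P (map f ?l))"
    by (simp add: filter_sort)
  also have "\<dots> = length (filter (\<lambda>i. P (f i)) ?l)"
    by (simp add: filter_map o_def)
  also have "\<dots> = card (set (filter (\<lambda>i. P (f i)) ?l))"
    by (rule distinct_card[symmetric]) simp
  also have "set (filter (\<lambda>i. P (f i)) ?l) = {i \<in> M. P (f i)}"
    using assms by auto
  finally show ?thesis .
qed

lemma kth_le_iff:
  assumes "finite M" "1 \<le> k" "k \<le> card M"
  shows "kth_smallest k f M \<le> a \<longleftrightarrow> k \<le> card {i\<in>M. f i \<le> a}"
proof -
  let ?xs = "sort (map f (sorted_list_of_set M))"
  have "kth_smallest k f M \<le> a \<longleftrightarrow> k \<le> card {j. j < length ?xs \<and> ?xs ! j \<le> a}"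
    unfolding kth_smallest_def by (rule sorted_le_iff) (use assms in auto)
  thus ?thesis using count_sort[OF assms(1), of f "\<lambda>x. x \<le> a"] by simp
qed

lemma kth_ge_iff:
  assumes "finite M" "1 \<le> k" "k \<le> card M"
  shows "b \<le> kth_smallest k f M \<longleftrightarrow> card {i\<in>M. f i < b} < k"
proof -
  let ?xs = "sort (map f (sorted_list_of_set M))"
  have "b \<le> kth_smallest k f M \<longleftrightarrow> card {j. j < length ?xs \<and> ?xs ! j < b} < k"
    unfolding kth_smallest_def by (rule sorted_ge_iff) (use assms in auto)
  thus ?thesis using count_sort[OF assms(1), of f "\<lambda>x. x < b"] by simp
qed

lemma inM_meas[measurable]: "Measurable.pred coord_measure inM"
  unfolding inM_def by measurable
lemma vv_meas[measurable]: "vv b e \<in> borel_measurable coord_measure"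
  unfolding vv_def by measurable

lemma card_sum: "real (card {i. i < (n::nat) \<and> P i}) = (\<Sum>i<n. if P i then 1 else 0)"
proof -
  have "{i\<in>{..<n}. P i} = {i. i < n \<and> P i}" by auto
  thus ?thesis using sum.inter_filter[of "{..<n}" "\<lambda>_. 1::real" P] by simp
qed

definition SM :: "nat \<Rightarrow> (nat \<Rightarrow> real\<times>real\<times>real) \<Rightarrow> real" where
  "SM n \<omega> = (\<Sum>i<n. if inM (\<omega> i) then 1 else 0)"
definition SA :: "nat \<Rightarrow> real \<Rightarrow> (nat \<Rightarrow> real) \<Rightarrow> real \<Rightarrow> (nat \<Rightarrow> real\<times>real\<times>real) \<Rightarrow> real" where
  "SA n b \<eta> t \<omega> = (\<Sum>i<n. if inM (\<omega> i) \<and> vv b (\<eta> i) (\<omega> i) \<le> b + t then 1 else 0)"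
definition SB :: "nat \<Rightarrow> real \<Rightarrow> (nat \<Rightarrow> real) \<Rightarrow> real \<Rightarrow> (nat \<Rightarrow> real\<times>real\<times>real) \<Rightarrow> real" where
  "SB n b \<eta> t \<omega> = (\<Sum>i<n. if inM (\<omega> i) \<and> vv b (\<eta> i) (\<omega> i) < b - t then 1 else 0)"

lemma ceil_half_le: "nat \<lceil>real c / 2\<rceil> \<le> a \<longleftrightarrow> c \<le> 2 * a"
proof -
  have "nat \<lceil>real c / 2\<rceil> \<le> a \<longleftrightarrow> \<lceil>real c / 2\<rceil> \<le> int a" by (simp add: nat_le_iff)
  also have "\<dots> \<longleftrightarrow> real c / 2 \<le> real a" by (simp add: ceiling_le_iff)
  also have "\<dots> \<longleftrightarrow> c \<le> 2 * a" by linarith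
  finally show ?thesis .
qed

lemma event_char:
  assumes t: "0 \<le> t"
  shows "(b - median_alg n (\<lambda>i. fst (\<omega> i) * b + \<eta> i) (\<lambda>i. fst (\<omega> i)) (\<lambda>i. fst (snd (\<omega> i))) (\<lambda>i. snd (snd (\<omega> i))))\<^sup>2 \<le> t\<^sup>2
    \<longleftrightarrow> (SM n \<omega> = 0 \<and> b\<^sup>2 \<le> t\<^sup>2) \<or> (SM n \<omega> \<noteq> 0 \<and> SM n \<omega> \<le> 2 * SA n b \<eta> t \<omega> \<and> 2 * SB n b \<eta> t \<omega> < SM n \<omega>)"
proof -
  define Ms where "Ms = {i. i < n \<and> inM (\<omega> i)}"
  define v where "v = (\<lambda>i. vv b (\<eta> i) (\<omega> i))"
  have fin: "finite Ms" by (simp add: Ms_def)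
  have med: "median_alg n (\<lambda>i. fst (\<omega> i) * b + \<eta> i) (\<lambda>i. fst (\<omega> i)) (\<lambda>i. fst (snd (\<omega> i))) (\<lambda>i. snd (snd (\<omega> i)))
     = (if Ms = {} then 0 else kth_smallest (nat \<lceil>real (card Ms) / 2\<rceil>) v Ms)"
  proof -
    have e1: "{i. i < n \<and> 1/2 \<le> \<bar>snd (snd (\<omega> i)) * fst (\<omega> i)\<bar>} = Ms"
      by (simp add: Ms_def inM_def)
    have e2: "(\<lambda>i. (snd (snd (\<omega> i)) * (fst (\<omega> i) * b + \<eta> i) + fst (snd (\<omega> i))) / (snd (snd (\<omega> i)) * fst (\<omega> i))) = v"
      by (simp add: v_def vv_def)
    show ?thesis unfolding median_alg_def Let_def e1 e2 ..
  qed
  have cM: "SM n \<omega> = real (card Ms)" by (simp add: SM_def Ms_def card_sum)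
  have cA: "SA n b \<eta> t \<omega> = real (card {i \<in> Ms. v i \<le> b + t})"
    unfolding SA_def Ms_def v_def by (subst card_sum[symmetric]) (simp add: conj_assoc)
  have cB: "SB n b \<eta> t \<omega> = real (card {i \<in> Ms. v i < b - t})"
    unfolding SB_def Ms_def v_def by (subst card_sum[symmetric]) (simp add: conj_assoc)
  have sq: "\<And>m. (b - m)\<^sup>2 \<le> t\<^sup>2 \<longleftrightarrow> b - t \<le> m \<and> m \<le> b + t"
  proof -
    fix m :: real
    have "(b - m)\<^sup>2 \<le> t\<^sup>2 \<longleftrightarrow> \<bar>b - m\<bar> \<le> \<bar>t\<bar>" by (simp add: abs_le_square_iff)
    thus "(b - m)\<^sup>2 \<le> t\<^sup>2 \<longleftrightarrow> b - t \<le> m \<and> m \<le> b + t" using t by auto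
  qed
  show ?thesis
  proof (cases "Ms = {}")
    case True
    thus ?thesis by (simp add: med cM)
  next
    case False
    let ?k = "nat \<lceil>real (card Ms) / 2\<rceil>"
    have c1: "card Ms \<ge> 1" using False fin by (simp add: Suc_le_eq card_gt_0_iff)
    have h: "?k \<le> 0 \<longleftrightarrow> card Ms \<le> 2 * 0" by (rule ceil_half_le)
    have k1: "1 \<le> ?k" using h c1 by linarith
    have k2: "?k \<le> card Ms" using ceil_half_le[of "card Ms" "card Ms"] by simp
    have "(b - median_alg n (\<lambda>i. fst (\<omega> i) * b + \<eta> i) (\<lambda>i. fst (\<omega> i)) (\<lambda>i. fst (snd (\<omega> i))) (\<lambda>i. snd (snd (\<omega> i))))\<^sup>2 \<le> t\<^sup>2
       \<longleftrightarrow> card {i \<in> Ms. v i < b - t} < ?k \<and> ?k \<le> card {i \<in> Ms. v i \<le> b + t}"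
      unfolding med using False by (simp add: sq kth_le_iff[OF fin k1 k2] kth_ge_iff[OF fin k1 k2])
    also have "\<dots> \<longleftrightarrow> 2 * card {i \<in> Ms. v i < b - t} < card Ms \<and> card Ms \<le> 2 * card {i \<in> Ms. v i \<le> b + t}"
      using ceil_half_le[of "card Ms" "card {i \<in> Ms. v i < b - t}"] ceil_half_le[of "card Ms" "card {i \<in> Ms. v i \<le> b + t}"]
      by linarith
    also have "\<dots> \<longleftrightarrow> 2 * real (card {i \<in> Ms. v i < b - t}) < real (card Ms) \<and> real (card Ms) \<le> 2 * real (card {i \<in> Ms. v i \<le> b + t})"
      by (simp only: of_nat_numeral[symmetric, where 'a=real] of_nat_mult[symmetric] of_nat_less_iff of_nat_le_iff)
    finally show ?thesis using False c1 by (auto simp: cM cA cB)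
  qed
qed

lemma SM_meas[measurable]: "SM n \<in> borel_measurable (sample_space n)"
  unfolding SM_def sample_space_def by measurable
lemma SA_meas[measurable]: "SA n b \<eta> t \<in> borel_measurable (sample_space n)"
  unfolding SA_def sample_space_def by measurable
lemma SB_meas[measurable]: "SB n b \<eta> t \<in> borel_measurable (sample_space n)"
  unfolding SB_def sample_space_def by measurable

lemma sum_up: "(\<Sum>i<n. up b t (\<eta> i) (\<omega> i)) = 2 * SA n b \<eta> t \<omega> - SM n \<omega>"
proof -
  have "(\<Sum>i<n. up b t (\<eta> i) (\<omega> i)) = (\<Sum>i<n. 2 * (if inM (\<omega> i) \<and> vv b (\<eta> i) (\<omega> i) \<le> b + t then 1 else 0) - (if inM (\<omega> i) then 1 else 0))"
    by (intro sum.cong) (auto simp: up_def)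
  thus ?thesis by (simp add: SA_def SM_def sum_subtractf sum_distrib_left)
qed

lemma sum_lo: "(\<Sum>i<n. lo b t (\<eta> i) (\<omega> i)) = SM n \<omega> - 2 * SB n b \<eta> t \<omega>"
proof -
  have "(\<Sum>i<n. lo b t (\<eta> i) (\<omega> i)) = (\<Sum>i<n. (if inM (\<omega> i) then 1 else 0) - 2 * (if inM (\<omega> i) \<and> vv b (\<eta> i) (\<omega> i) < b - t then 1 else 0))"
    by (intro sum.cong) (auto simp: lo_def)
  thus ?thesis by (simp add: SB_def SM_def sum_subtractf sum_distrib_left)
qed

lemma SB_nonneg: "SB n b \<eta> t \<omega> \<ge> 0" by (simp add: SB_def sum_nonneg)

theorem mainTheorem13:
  "\<exists>c::real. c > 0 \<and>
    (\<forall>(n::nat) (\<beta>::real) (\<eta>::nat \<Rightarrow> real) (\<alpha>::real) (\<tau>::real).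
      0 < \<alpha> \<and> \<alpha> \<le> 1 \<and> real (card {i. i < n \<and> \<bar>\<eta> i\<bar> \<le> 1}) \<ge> \<alpha> * real n \<and>
      0 < \<tau> \<and> \<tau> \<le> \<alpha>\<^sup>2 * real n \<longrightarrow>
      measure (sample_space n)
        {\<omega> \<in> space (sample_space n).
           (let X = (\<lambda>i. fst (\<omega> i));
                w = (\<lambda>i. fst (snd (\<omega> i)));
                \<sigma> = (\<lambda>i. snd (snd (\<omega> i)));
                y = (\<lambda>i. X i * \<beta> + \<eta> i)
            in (\<beta> - median_alg n y X w \<sigma>)\<^sup>2 \<le> \<tau> / (\<alpha>\<^sup>2 * real n))}
      \<ge> 1 - 2 * exp (- c * \<tau>))"
proof (intro exI[of _ "kap ^ 4 / 32"] conjI allI impI)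
  show "kap ^ 4 / 32 > 0" using kap_pos by simp
  fix n :: nat and \<beta> :: real and \<eta> :: "nat \<Rightarrow> real" and \<alpha> \<tau> :: real
  assume H: "0 < \<alpha> \<and> \<alpha> \<le> 1 \<and> real (card {i. i < n \<and> \<bar>\<eta> i\<bar> \<le> 1}) \<ge> \<alpha> * real n \<and>
      0 < \<tau> \<and> \<tau> \<le> \<alpha>\<^sup>2 * real n"
  hence a0: "0 < \<alpha>" and a1: "\<alpha> \<le> 1" and cg: "real (card {i. i < n \<and> \<bar>\<eta> i\<bar> \<le> 1}) \<ge> \<alpha> * real n"
    and tau0: "0 < \<tau>" and tau1: "\<tau> \<le> \<alpha>\<^sup>2 * real n" by auto
  interpret S: prob_space "sample_space n" by (rule prob_sample)
  have n0: "n > 0"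
  proof (rule ccontr)
    assume "\<not> n > 0" thus False using tau0 tau1 by simp
  qed
  define T where "T = \<tau> / (\<alpha>\<^sup>2 * real n)"
  define t where "t = sqrt T"
  have an: "\<alpha>\<^sup>2 * real n > 0" using a0 n0 by simp
  have T0: "T > 0" using tau0 an by (simp add: T_def)
  have T1: "T \<le> 1" using tau1 an by (simp add: T_def)
  have t0: "t > 0" using T0 by (simp add: t_def)
  have t1: "t \<le> 1" using T1 by (simp add: t_def)
  have tT: "t\<^sup>2 = T" using T0 by (simp add: t_def)
  define E where "E = {\<omega> \<in> space (sample_space n).
           (let X = (\<lambda>i. fst (\<omega> i));
                w = (\<lambda>i. fst (snd (\<omega> i)));
                \<sigma> = (\<lambda>i. snd (snd (\<omega> i)));
                y = (\<lambda>i. X i * \<beta> + \<eta> i)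
            in (\<beta> - median_alg n y X w \<sigma>)\<^sup>2 \<le> \<tau> / (\<alpha>\<^sup>2 * real n))}"
  have Eeq: "E = {\<omega> \<in> space (sample_space n). (SM n \<omega> = 0 \<and> \<beta>\<^sup>2 \<le> t\<^sup>2) \<or>
      (SM n \<omega> \<noteq> 0 \<and> SM n \<omega> \<le> 2 * SA n \<beta> \<eta> t \<omega> \<and> 2 * SB n \<beta> \<eta> t \<omega> < SM n \<omega>)}"
    unfolding E_def Let_def T_def[symmetric] tT[symmetric]
    by (intro Collect_cong conj_cong refl event_char less_imp_le[OF t0])
  have Es: "E \<in> sets (sample_space n)"
  proof -
    have [measurable]: "Measurable.pred (sample_space n) (\<lambda>\<omega>. SM n \<omega> = 0)"
      unfolding pred_def by (rule borel_measurable_eq) auto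
    have [measurable]: "Measurable.pred (sample_space n) (\<lambda>\<omega>. SM n \<omega> \<le> 2 * SA n \<beta> \<eta> t \<omega>)"
      unfolding pred_def by (rule borel_measurable_le) auto
    have [measurable]: "Measurable.pred (sample_space n) (\<lambda>\<omega>. 2 * SB n \<beta> \<eta> t \<omega> < SM n \<omega>)"
      unfolding pred_def by (rule borel_measurable_less) auto
    show ?thesis unfolding Eeq by measurable
  qed
  define U where "U = {\<omega> \<in> space (sample_space n). (\<Sum>i<n. up \<beta> t (\<eta> i) (\<omega> i)) \<le> 0}"
  define L where "L = {\<omega> \<in> space (sample_space n). (\<Sum>i<n. lo \<beta> t (\<eta> i) (\<omega> i)) \<le> 0}"
  have Us: "U \<in> sets (sample_space n)" unfolding U_def sample_space_def by measurable
  have Ls: "L \<in> sets (sample_space n)" unfolding L_def sample_space_def by measurable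
  have sub: "space (sample_space n) - E \<subseteq> U \<union> L"
  proof
    fix \<omega> assume w: "\<omega> \<in> space (sample_space n) - E"
    show "\<omega> \<in> U \<union> L"
    proof (rule ccontr)
      assume "\<omega> \<notin> U \<union> L"
      hence "2 * SA n \<beta> \<eta> t \<omega> - SM n \<omega> > 0" "SM n \<omega> - 2 * SB n \<beta> \<eta> t \<omega> > 0"
        using w by (auto simp: U_def L_def sum_up sum_lo)
      hence "\<omega> \<in> E" using w SB_nonneg[of n \<beta> \<eta> t \<omega>] unfolding Eeq by auto
      thus False using w by auto
    qed
  qed
  define mu where "mu = (\<Sum>i<n. integral\<^sup>L coord_measure (up \<beta> t (\<eta> i)))"
  have mu_lo: "(\<Sum>i<n. integral\<^sup>L coord_measure (lo \<beta> t (\<eta> i))) = mu"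
    by (simp add: mu_def E_lo)
  have mu_ge: "mu \<ge> \<alpha> * real n * (kap\<^sup>2 * t / 4)"
  proof -
    have s1: "(\<Sum>i<n. (kap\<^sup>2 * t / 4) * (if \<bar>\<eta> i\<bar> \<le> 1 then 1 else 0)) \<le> mu"
      unfolding mu_def
    proof (intro sum_mono)
      fix i assume "i \<in> {..<n}"
      show "(kap\<^sup>2 * t / 4) * (if \<bar>\<eta> i\<bar> \<le> 1 then 1 else 0) \<le> integral\<^sup>L coord_measure (up \<beta> t (\<eta> i))"
      proof (cases "\<bar>\<eta> i\<bar> \<le> 1")
        case True thus ?thesis using E_up_good[OF True t0 t1, of \<beta>] by simp
      next
        case False thus ?thesis using E_up_nonneg[OF less_imp_le[OF t0], of \<beta> "\<eta> i"] by simp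
      qed
    qed
    have s2: "(\<Sum>i<n. (kap\<^sup>2 * t / 4) * (if \<bar>\<eta> i\<bar> \<le> 1 then 1 else 0)) = (kap\<^sup>2 * t / 4) * real (card {i. i < n \<and> \<bar>\<eta> i\<bar> \<le> 1})"
      by (simp add: card_sum sum_distrib_left)
    have s3: "(kap\<^sup>2 * t / 4) * (\<alpha> * real n) \<le> (kap\<^sup>2 * t / 4) * real (card {i. i < n \<and> \<bar>\<eta> i\<bar> \<le> 1})"
      using cg kap_pos t0 by (intro mult_left_mono) auto
    show ?thesis using s1 s2 s3 by (simp add: mult_ac)
  qed
  have mu0: "mu \<ge> 0"
  proof -
    have "0 \<le> \<alpha> * real n * (kap\<^sup>2 * t / 4)" using a0 kap_pos t0 by simp
    thus ?thesis using mu_ge by linarith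
  qed
  have bnd: "exp (- mu\<^sup>2 / (2 * real n)) \<le> exp (- (kap ^ 4 / 32) * \<tau>)"
  proof -
    have "(\<alpha> * real n * (kap\<^sup>2 * t / 4))\<^sup>2 \<le> mu\<^sup>2"
      using mu_ge a0 kap_pos t0 by (intro power_mono) auto
    also have "(\<alpha> * real n * (kap\<^sup>2 * t / 4))\<^sup>2 = real n * (kap ^ 4 / 16) * (\<alpha>\<^sup>2 * real n * t\<^sup>2)"
      by (simp add: power2_eq_square power4_eq_xxxx)
    also have "\<alpha>\<^sup>2 * real n * t\<^sup>2 = \<tau>"
      using an a0 n0 by (simp add: tT T_def)
    finally have "real n * (kap ^ 4 / 16) * \<tau> \<le> mu\<^sup>2" .
    hence "(kap ^ 4 / 32) * \<tau> \<le> mu\<^sup>2 / (2 * real n)"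
      using n0 by (simp add: field_simps)
    thus ?thesis by simp
  qed
  have hU: "measure (sample_space n) U \<le> exp (- mu\<^sup>2 / (2 * real n))"
    unfolding U_def mu_def by (rule hoeff[OF n0]) (use mu0 in \<open>auto simp: up_bound mu_def\<close>)
  have hL: "measure (sample_space n) L \<le> exp (- mu\<^sup>2 / (2 * real n))"
    unfolding L_def mu_lo[symmetric] by (rule hoeff[OF n0]) (use mu0 in \<open>auto simp: lo_bound mu_lo\<close>)
  have PU: "measure (sample_space n) U \<le> exp (- (kap ^ 4 / 32) * \<tau>)"
    using hU bnd by linarith
  have PL: "measure (sample_space n) L \<le> exp (- (kap ^ 4 / 32) * \<tau>)"
    using hL bnd by linarith
  have "measure (sample_space n) (space (sample_space n) - E) \<le> measure (sample_space n) (U \<union> L)"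
    using sub Us Ls by (intro S.finite_measure_mono) auto
  also have "\<dots> \<le> measure (sample_space n) U + measure (sample_space n) L"
    using Us Ls by (intro measure_subadditive) (auto simp: S.emeasure_eq_measure)
  finally have "measure (sample_space n) (space (sample_space n) - E) \<le> 2 * exp (- (kap ^ 4 / 32) * \<tau>)"
    using PU PL by simp
  moreover have "measure (sample_space n) (space (sample_space n) - E) = 1 - measure (sample_space n) E"
    using Es by (rule S.prob_compl)
  ultimately show "measure (sample_space n) E \<ge> 1 - 2 * exp (- (kap ^ 4 / 32) * \<tau>)" by simp
qed

end
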